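(* For any pair of probability distributions $P,Q$ on a common countable set, $$C(P,Q)\ \ge\ -\tfrac12\log\!\left(1-\big(d_{\mathrm{TV}}(P,Q)\big)^2\right),$$ and for each value $\varepsilon\in[0,1)$ of $d_{\mathrm{TV}}(P,Q)$ there exist $P,Q$ with $d_{\mathrm{TV}}(P,Q)=\varepsilon$ attaining equality.
   Context: $d_{\mathrm{TV}}(P,Q)=\frac12\sum_x |P(x)-Q(x)|$; the Chernoff information is $C(P,Q)=-\min_{\lambda\in[0,1]}\log\left(\sum_x P(x)^{\lambda}Q(x)^{1-\lambda}\right)$ (with $\log 0=-\infty$; the right-hand side is $+\infty$ when $d_{\mathrm{TV}}=1$). Logarithms are natural. *)

theory Defs
  imports "HOL-Probability.Probability_Mass_Function" "HOL-Analysis.Infinite_Sum"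
begin

definition dTV :: "'a pmf \<Rightarrow> 'a pmf \<Rightarrow> real" where
  "dTV P Q = (1/2) * (\<Sum>\<^sub>\<infinity>x. \<bar>pmf P x - pmf Q x\<bar>)"

text \<open>The sum  sum_x P(x)^l Q(x)^(1-l)  (with 0 powr a = 0).\<close>
definition chernoff_sum :: "'a pmf \<Rightarrow> 'a pmf \<Rightarrow> real \<Rightarrow> real" where
  "chernoff_sum P Q l = (\<Sum>\<^sub>\<infinity>x. pmf P x powr l * pmf Q x powr (1 - l))"

definition neg_ln :: "real \<Rightarrow> ereal" where
  "neg_ln x = (if x \<le> 0 then \<infinity> else ereal (- ln x))"

text \<open>Chernoff information: -min over l in [0,1] of log(sum), i.e. the sup of -log(sum).\<close>
definition chernoff_info :: "'a pmf \<Rightarrow> 'a pmf \<Rightarrow> ereal" where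
  "chernoff_info P Q = (SUP l\<in>{0..1}. neg_ln (chernoff_sum P Q l))"

end

theory Submission
  imports Defs
begin

lemma pmf_summable: "pmf P summable_on A"
proof -
  have "pmf P abs_summable_on A" by (rule pmf_abs_summable)
  hence "Infinite_Sum.abs_summable_on (pmf P) A" using abs_summable_equivalent by blast
  thus ?thesis using summable_on_iff_abs_summable_on_real by blast
qed

lemma pmf_infsum1: "infsum (pmf P) UNIV = 1"
proof -
  have "pmf P abs_summable_on UNIV" by (rule pmf_abs_summable)
  hence "infsetsum (pmf P) UNIV = infsum (pmf P) UNIV" by (rule infsetsum_infsum)
  moreover have "infsetsum (pmf P) UNIV = 1" by (rule infsetsum_pmf_eq_1) auto
  ultimately show ?thesis by simp
qed

lemma absdiff_summable: "(\<lambda>x. \<bar>pmf P x - pmf Q x\<bar>) summable_on UNIV"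
proof -
  have "(\<lambda>x. pmf P x + pmf Q x) summable_on UNIV"
    by (intro summable_on_add pmf_summable)
  thus ?thesis
    by (rule summable_on_comparison_test) (auto simp: abs_le_iff pmf_nonneg)
qed

lemma sqrt_amgm:
  fixes p q t :: real
  assumes "p \<ge> 0" "q \<ge> 0" "t > 0"
  shows "sqrt (p*q) \<le> (t + 1/t)/4 * p + (t + 1/t)/4 * q + (1/t - t)/4 * \<bar>p - q\<bar>"
proof -
  define mn where "mn = min p q"
  define mx where "mx = max p q"
  have pq: "p*q = mn*mx" unfolding mn_def mx_def by (auto simp: min_def max_def)
  have rhs: "(t + 1/t)/4 * p + (t + 1/t)/4 * q + (1/t - t)/4 * \<bar>p - q\<bar> = (t*mn + mx/t)/2"
    unfolding mn_def mx_def using assms by (auto simp: min_def max_def field_simps)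
  have mn0: "mn \<ge> 0" "mx \<ge> 0" using assms unfolding mn_def mx_def by auto
  have "sqrt (mn*mx) = sqrt ((t*mn)*(mx/t))" using assms by simp
  also have "\<dots> \<le> (t*mn + mx/t)/2"
    by (rule arith_geo_mean_sqrt) (use mn0 assms in auto)
  finally have "sqrt (p*q) \<le> (t*mn + mx/t)/2" using pq by simp
  thus ?thesis by (simp only: rhs)
qed

lemma BC_bound:
  assumes "t > 0"
  shows "chernoff_sum P Q (1/2) \<le> (t*(1 - dTV P Q) + (1 + dTV P Q)/t)/2"
proof -
  define a where "a = (t + 1/t)/4"
  define b where "b = (1/t - t)/4"
  define S where "S = (\<Sum>\<^sub>\<infinity>x. \<bar>pmf P x - pmf Q x\<bar>)"
  have cs: "chernoff_sum P Q (1/2) = (\<Sum>\<^sub>\<infinity>x. sqrt (pmf P x * pmf Q x))"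
    unfolding chernoff_sum_def by (simp add: powr_half_sqrt real_sqrt_mult)
  have s1: "(\<lambda>x. a * pmf P x) summable_on UNIV" by (intro summable_on_cmult_right pmf_summable)
  have s2: "(\<lambda>x. a * pmf Q x) summable_on UNIV" by (intro summable_on_cmult_right pmf_summable)
  have s3: "(\<lambda>x. b * \<bar>pmf P x - pmf Q x\<bar>) summable_on UNIV"
    by (intro summable_on_cmult_right absdiff_summable)
  have s12: "(\<lambda>x. a * pmf P x + a * pmf Q x) summable_on UNIV" using s1 s2 by (rule summable_on_add)
  have sum: "(\<lambda>x. a * pmf P x + a * pmf Q x + b * \<bar>pmf P x - pmf Q x\<bar>) summable_on UNIV"
    using s12 s3 by (rule summable_on_add)
  have ssq: "(\<lambda>x. sqrt (pmf P x * pmf Q x)) summable_on UNIV"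
  proof (rule summable_on_comparison_test[OF sum])
    fix x show "sqrt (pmf P x * pmf Q x) \<le> a * pmf P x + a * pmf Q x + b * \<bar>pmf P x - pmf Q x\<bar>"
      unfolding a_def b_def by (rule sqrt_amgm) (use assms in auto)
  qed auto
  have "(\<Sum>\<^sub>\<infinity>x. sqrt (pmf P x * pmf Q x)) \<le>
        (\<Sum>\<^sub>\<infinity>x. a * pmf P x + a * pmf Q x + b * \<bar>pmf P x - pmf Q x\<bar>)"
    by (rule infsum_mono[OF ssq sum]) (unfold a_def b_def, rule sqrt_amgm, use assms in auto)
  also have "\<dots> = (\<Sum>\<^sub>\<infinity>x. a * pmf P x + a * pmf Q x) + (\<Sum>\<^sub>\<infinity>x. b * \<bar>pmf P x - pmf Q x\<bar>)"
    by (rule infsum_add[OF s12 s3])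
  also have "\<dots> = (\<Sum>\<^sub>\<infinity>x. a * pmf P x) + (\<Sum>\<^sub>\<infinity>x. a * pmf Q x) + (\<Sum>\<^sub>\<infinity>x. b * \<bar>pmf P x - pmf Q x\<bar>)"
    by (simp add: infsum_add[OF s1 s2])
  also have "\<dots> = a + a + b * S"
    unfolding S_def
    by (simp add: infsum_cmult_right pmf_summable absdiff_summable pmf_infsum1)
  also have "\<dots> = (t*(1 - dTV P Q) + (1 + dTV P Q)/t)/2"
    unfolding a_def b_def dTV_def S_def[symmetric] using assms by (simp add: field_simps)
  finally show ?thesis using cs by simp
qed

lemma dTV_bounds: "0 \<le> dTV P Q" "dTV P Q \<le> 1"
proof -
  have sp: "(\<lambda>x. pmf P x + pmf Q x) summable_on UNIV"
    by (intro summable_on_add pmf_summable)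
  have "(\<Sum>\<^sub>\<infinity>x. \<bar>pmf P x - pmf Q x\<bar>) \<le> (\<Sum>\<^sub>\<infinity>x. pmf P x + pmf Q x)"
    by (rule infsum_mono[OF absdiff_summable sp]) (auto simp: abs_le_iff pmf_nonneg)
  also have "\<dots> = 2" by (simp add: infsum_add pmf_summable pmf_infsum1)
  finally show "dTV P Q \<le> 1" unfolding dTV_def by simp
  show "0 \<le> dTV P Q" unfolding dTV_def by (simp add: infsum_nonneg)
qed

lemma BC_nonneg: "chernoff_sum P Q (1/2) \<ge> 0"
  unfolding chernoff_sum_def by (rule infsum_nonneg) simp

lemma BC_sq: "(chernoff_sum P Q (1/2))^2 \<le> 1 - (dTV P Q)^2"
proof -
  define B where "B = chernoff_sum P Q (1/2)"
  define T where "T = dTV P Q"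
  have B0: "B \<ge> 0" unfolding B_def by (rule BC_nonneg)
  have T: "0 \<le> T" "T \<le> 1" unfolding T_def by (rule dTV_bounds)+
  have bd: "\<And>t. t > 0 \<Longrightarrow> B \<le> (t*(1 - T) + (1 + T)/t)/2"
    unfolding B_def T_def by (rule BC_bound)
  show ?thesis
  proof (cases "T < 1")
    case True
    define t where "t = sqrt ((1+T)/(1-T))"
    have tp: "t > 0" unfolding t_def using T True by simp
    have e1: "t*(1-T) = sqrt ((1+T)*(1-T))"
    proof -
      have h: "sqrt ((1-T)^2) = 1-T" using True by simp
      have "t*(1-T) = sqrt ((1+T)/(1-T)) * sqrt ((1-T)^2)" using h t_def by simp
      also have "\<dots> = sqrt ((1+T)/(1-T) * (1-T)^2)" by (rule real_sqrt_mult[symmetric])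
      finally have "t*(1-T) = sqrt ((1+T)/(1-T) * (1-T)^2)" .
      also have "(1+T)/(1-T) * (1-T)^2 = (1+T)*(1-T)" using True by (simp add: field_simps power2_eq_square)
      finally show ?thesis .
    qed
    have e2: "(1+T)/t = sqrt ((1+T)*(1-T))"
    proof -
      have "(1+T) = t * sqrt ((1+T)*(1-T))"
      proof -
        have "t * sqrt ((1+T)*(1-T)) = sqrt ((1+T)/(1-T) * ((1+T)*(1-T)))"
          unfolding t_def by (rule real_sqrt_mult[symmetric])
        also have "(1+T)/(1-T) * ((1+T)*(1-T)) = (1+T)^2" using True by (simp add: field_simps power2_eq_square)
        finally show ?thesis using T by simp
      qed
      hence "(1+T)/t = (t * sqrt ((1+T)*(1-T)))/t" by simp
      thus ?thesis using tp by simp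
    qed
    have "B \<le> sqrt ((1+T)*(1-T))" using bd[OF tp] e1 e2 by simp
    hence "B^2 \<le> (sqrt ((1+T)*(1-T)))^2" using B0 by (simp add: power_mono)
    also have "\<dots> = 1 - T^2"
    proof -
      have "T*T \<le> 1" using T by (simp add: mult_le_one)
      thus ?thesis using T True by (simp add: power2_eq_square algebra_simps)
    qed
    finally show ?thesis unfolding B_def T_def .
  next
    case False
    hence T1: "T = 1" using T by simp
    have "B \<le> 0"
    proof (rule ccontr)
      assume "\<not> B \<le> 0"
      hence Bp: "B > 0" by simp
      have "B \<le> (2/B * (1 - T) + (1 + T)/(2/B))/2" using bd[of "2/B"] Bp by simp
      also have "\<dots> = B/2" using T1 by simp
      finally show False using Bp by simp
    qed
    hence "B = 0" using B0 by simp
    thus ?thesis unfolding B_def T_def[symmetric] using T1 by simp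
  qed
qed

lemma part1: "chernoff_info P Q \<ge> ereal (1/2) * neg_ln (1 - (dTV P Q)^2)"
proof -
  define B where "B = chernoff_sum P Q (1/2)"
  define T where "T = dTV P Q"
  have B0: "B \<ge> 0" unfolding B_def by (rule BC_nonneg)
  have sq: "B^2 \<le> 1 - T^2" unfolding B_def T_def by (rule BC_sq)
  have ci: "neg_ln B \<le> chernoff_info P Q"
    unfolding chernoff_info_def B_def by (rule SUP_upper) auto
  have "ereal (1/2) * neg_ln (1 - T^2) \<le> neg_ln B"
  proof (cases "B = 0")
    case True thus ?thesis by (simp add: neg_ln_def)
  next
    case False
    hence Bp: "B > 0" using B0 by simp
    hence pos: "1 - T^2 > 0" using sq by (smt (verit) zero_less_power)
    have "ln (B^2) \<le> ln (1 - T^2)" using sq Bp pos by (subst ln_le_cancel_iff) auto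
    hence "2 * ln B \<le> ln (1 - T^2)" using Bp by (simp add: ln_realpow)
    hence "(1/2) * (- ln (1 - T^2)) \<le> - ln B" by simp
    thus ?thesis using pos Bp by (simp add: neg_ln_def)
  qed
  thus ?thesis using ci T_def by simp
qed

lemma part2:
  fixes e :: real
  assumes "0 \<le> e" "e < 1"
  shows "\<exists>P Q :: bool pmf. dTV P Q = e \<and> chernoff_info P Q = ereal (1/2) * neg_ln (1 - e^2)"
proof -
  define a where "a = (1+e)/2"
  define b where "b = (1-e)/2"
  have a: "0 < a" "a \<le> 1" and b: "0 < b" "b \<le> 1" using assms unfolding a_def b_def by auto
  define P where "P = bernoulli_pmf a"
  define Q where "Q = bernoulli_pmf b"
  have pP: "pmf P True = a" "pmf P False = 1 - a" unfolding P_def using a by simp_all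
  have pQ: "pmf Q True = b" "pmf Q False = 1 - b" unfolding Q_def using b by simp_all
  have ab1: "1 - a = b" "1 - b = a" unfolding a_def b_def by (simp_all add: field_simps)
  have UNIVb: "(UNIV :: bool set) = {True, False}" by auto
  have tv: "dTV P Q = e"
  proof -
    have d: "a - b = e" unfolding a_def b_def by (simp add: field_simps)
    have "dTV P Q = (1/2) * (\<bar>a - b\<bar> + \<bar>b - a\<bar>)"
      unfolding dTV_def UNIVb by (simp add: pP pQ ab1)
    also have "\<dots> = e" using d assms by (simp add: abs_minus_commute)
    finally show ?thesis .
  qed
  have cs: "chernoff_sum P Q l = a powr l * b powr (1-l) + b powr l * a powr (1-l)" for l
    unfolding chernoff_sum_def UNIVb by (simp add: pP pQ ab1)
  define s where "s = sqrt (1 - e^2)"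
  have s4: "4*(a*b) = 1 - e^2" unfolding a_def b_def by (simp add: field_simps power2_eq_square)
  have "e^2 < 1" using assms by (simp add: abs_square_less_1)
  hence sp: "s > 0" unfolding s_def by simp
  have lower: "chernoff_sum P Q l \<ge> s" for l
  proof -
    define x where "x = a powr l * b powr (1-l)"
    define y where "y = b powr l * a powr (1-l)"
    have xy: "x*y = a*b"
    proof -
      have "x*y = (a powr l * a powr (1-l)) * (b powr l * b powr (1-l))"
        unfolding x_def y_def by (simp add: algebra_simps)
      also have "\<dots> = a * b" using a b by (simp add: powr_add[symmetric])
      finally show ?thesis .
    qed
    have "sqrt (x*y) \<le> (x+y)/2" by (rule arith_geo_mean_sqrt) (auto simp: x_def y_def)
    hence "2 * sqrt (a*b) \<le> x + y" using xy by simp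
    moreover have "2 * sqrt (a*b) = s" unfolding s_def s4[symmetric]
      by (simp add: real_sqrt_mult)
    ultimately show ?thesis using cs x_def y_def by simp
  qed
  have half: "chernoff_sum P Q (1/2) = s"
  proof -
    have "chernoff_sum P Q (1/2) = 2 * (sqrt a * sqrt b)"
      using cs[of "1/2"] a b by (simp add: powr_half_sqrt)
    also have "\<dots> = s" unfolding s_def s4[symmetric] by (simp add: real_sqrt_mult)
    finally show ?thesis .
  qed
  have ci: "chernoff_info P Q = neg_ln s"
    unfolding chernoff_info_def
  proof (rule antisym)
    show "(SUP l\<in>{0..1}. neg_ln (chernoff_sum P Q l)) \<le> neg_ln s"
    proof (rule SUP_least)
      fix l :: real
      have "chernoff_sum P Q l > 0" using lower[of l] sp by simp
      thus "neg_ln (chernoff_sum P Q l) \<le> neg_ln s" using lower[of l] sp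
        by (simp add: neg_ln_def)
    qed
    show "neg_ln s \<le> (SUP l\<in>{0..1}. neg_ln (chernoff_sum P Q l))"
      using half by (intro SUP_upper2[of "1/2"]) auto
  qed
  have pos: "1 - e^2 > 0" using sp unfolding s_def by simp
  have "neg_ln s = ereal (1/2) * neg_ln (1 - e^2)"
    using sp pos unfolding s_def by (simp add: neg_ln_def ln_sqrt)
  thus ?thesis using tv ci by (intro exI[of _ P] exI[of _ Q]) simp
qed

theorem corollary1:
  shows "(\<forall>(P :: 'a::countable pmf) Q.
            chernoff_info P Q \<ge> ereal (1/2) * neg_ln (1 - (dTV P Q)^2))
       \<and> (\<forall>\<epsilon>::real. 0 \<le> \<epsilon> \<and> \<epsilon> < 1 \<longrightarrow>
            (\<exists>P Q :: bool pmf. dTV P Q = \<epsilon> \<and>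
               chernoff_info P Q = ereal (1/2) * neg_ln (1 - \<epsilon>^2)))"
  using part1 part2 by blast

end
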